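(* There exists a Heffter array $H(n;k)$ for all $n\equiv 2\pmod 4$ with $n\ge 6$ and all $k\equiv 1\pmod 4$ with $5\le k<n$.
   Context: A Heffter array $H(n;k)$ is an $n\times n$ array in which some cells are filled with nonzero integers and the others are empty, such that: each row and each column contains exactly $k$ filled cells; the entries of every row and of every column sum to $0$ modulo $2nk+1$; and for each integer $1\le x\le nk$, exactly one of $x$ or $-x$ appears in the array, and it appears exactly once. *)

theory Defs
  imports Main
begin

text \<open>A partially filled n x n array: rows and columns indexed by 0..n-1;
  A i j = None means the cell (i,j) is empty, A i j = Some v means it contains v.\<close>

definition heffter :: "nat \<Rightarrow> nat \<Rightarrow> (nat \<Rightarrow> nat \<Rightarrow> int option) \<Rightarrow> bool" where
  "heffter n k A \<longleftrightarrow>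
     (\<forall>i j. (i \<ge> n \<or> j \<ge> n) \<longrightarrow> A i j = None) \<and>
     (\<forall>i<n. \<forall>j<n. \<forall>v. A i j = Some v \<longrightarrow> v \<noteq> 0) \<and>
     (\<forall>i<n. card {j. j < n \<and> A i j \<noteq> None} = k) \<and>
     (\<forall>j<n. card {i. i < n \<and> A i j \<noteq> None} = k) \<and>
     (\<forall>i<n. (\<Sum>j\<in>{j. j < n \<and> A i j \<noteq> None}. the (A i j)) mod (2 * int n * int k + 1) = 0) \<and>
     (\<forall>j<n. (\<Sum>i\<in>{i. i < n \<and> A i j \<noteq> None}. the (A i j)) mod (2 * int n * int k + 1) = 0) \<and>
     (\<forall>x::int. 1 \<le> x \<and> x \<le> int n * int k \<longrightarrow>
        (\<exists>!p. fst p < n \<and> snd p < n \<and>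
              (A (fst p) (snd p) = Some x \<or> A (fst p) (snd p) = Some (- x))))"

end

theory Submission
  imports Defs
begin


definition cv :: "nat \<Rightarrow> nat \<Rightarrow> nat \<Rightarrow> nat \<Rightarrow> nat \<Rightarrow> nat \<Rightarrow> int option" where
"cv m T I d r c = (let N = int (2*m*(4*T+1)); mi = int m; Ii = int I; u = int ((I + m - 1) mod m) in
  if d = 0 then Some (if r = 0 then (if c = 0 then -(N - Ii) else -5*mi + Ii) else (if c = 0 then 8*mi - Ii else mi - Ii))
  else if d = 1 then Some (if r = 0 then (if c = 0 then -(N - mi - u) else 6*mi - u) else (if c = 0 then -7*mi + u else 2*mi - u))
  else if d = 2 then (if r = c then Some (if r = 0 then -(2*mi+1+2*Ii) else -4*mi + 2*Ii) else None)
  else if d \<le> 2*T then Some ((if even d then -1 else 1) *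
     (let x = 8*mi + 1 + 4*(int (d-3)*mi + Ii) in
       if r = 0 then (if c = 0 then x else -(x+1)) else (if c=0 then -(x+2) else x+3)))
  else None)"

definition Arr :: "nat \<Rightarrow> nat \<Rightarrow> nat \<Rightarrow> nat \<Rightarrow> int option" where
"Arr m T i j = (if i < 2*m \<and> j < 2*m then cv m T (i div 2) ((j div 2 + m - i div 2) mod m) (i mod 2) (j mod 2) else None)"

lemma modeq: "(x::nat) < m \<Longrightarrow> y = x + q*m \<Longrightarrow> y mod m = x"
  by simp

lemma L1: assumes "I < (m::nat)" "d < m" shows "((I+d) mod m + m - I) mod m = d"
proof (cases "I + d < m")
  case True
  then have "(I+d) mod m = I + d" by simp
  then have "(I+d) mod m + m - I = d + 1*m" by simp
  then show ?thesis using assms modeq by metis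
next
  case False
  then have "(I+d) mod m = I + d - m" using assms by (simp add: mod_if)
  then have "(I+d) mod m + m - I = d + 0*m" using False by simp
  then show ?thesis using assms modeq by metis
qed

lemma L3: assumes "J < (m::nat)" "d < m" shows "(J + m - (J + m - d) mod m) mod m = d"
proof (cases "d \<le> J")
  case True
  then have "(J + m - d) mod m = J - d" using assms by (simp add: mod_if)
  then have "J + m - (J + m - d) mod m = d + 1*m" using True by simp
  then show ?thesis using assms modeq by metis
next
  case False
  then have "(J + m - d) mod m = J + m - d" using assms by (simp add: mod_if)
  then have "J + m - (J + m - d) mod m = d + 0*m" using False assms by simp
  then show ?thesis using assms modeq by metis
qed

lemma L6: assumes "J < (m::nat)" "d < m" shows "((J + m - d) mod m + d) mod m = J"
proof (cases "d \<le> J")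
  case True
  then have "(J + m - d) mod m = J - d" using assms by (simp add: mod_if)
  then have "(J + m - d) mod m + d = J + 0*m" using True by simp
  then show ?thesis using assms modeq by metis
next
  case False
  then have "(J + m - d) mod m = J + m - d" using assms by (simp add: mod_if)
  then have "(J + m - d) mod m + d = J + 1*m" using False assms by simp
  then show ?thesis using assms modeq by metis
qed

lemma L7: "J < (m::nat) \<Longrightarrow> I < m \<Longrightarrow> (I + (J + m - I) mod m) mod m = J"
  using L6[of J m I] by (simp add: add.commute)

lemma L4: assumes "2 \<le> (m::nat)" "u < m" shows "((u+1) mod m + m - 1) mod m = u"
proof (cases "u + 1 < m")
  case True
  then have "(u+1) mod m + m - 1 = u + 1*m" by simp
  then show ?thesis using assms modeq by metis
next
  case False
  then have "u + 1 = m" using assms by simp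
  then have "(u+1) mod m + m - 1 = u + 0*m" by simp
  then show ?thesis using assms modeq by metis
qed

lemma L5: assumes "2 \<le> (m::nat)" "J < m" shows "((J+m-1) mod m + m - 1) mod m = (J + m - 2) mod m"
proof -
  consider "J = 0" | "J = 1" | "2 \<le> J" by linarith
  then show ?thesis
  proof cases
    case 1
    then show ?thesis using assms by (simp add: mod_if)
  next
    case 2
    then show ?thesis using assms by (simp add: mod_if)
  next
    case 3
    then have a: "(J+m-1) mod m = J - 1" using assms by (simp add: mod_if)
    have b: "(J+m-2) mod m = J - 2" using assms 3 by (simp add: mod_if)
    show ?thesis unfolding a b using assms 3 by (simp add: mod_if)
  qed
qed

lemma access: "I < m \<Longrightarrow> d < m \<Longrightarrow> r < 2 \<Longrightarrow> c < 2 \<Longrightarrow> J = (I+d) mod m \<Longrightarrow>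
   Arr m T (2*I+r) (2*J+c) = cv m T I d r c"
proof -
  assume a: "I < m" "d < m" "r < 2" "c < 2" "J = (I+d) mod m"
  have m0: "0 < m" using a by simp
  have J: "J < m" using a m0 by simp
  have i: "2*I+r < 2*m" "(2*I+r) div 2 = I" "(2*I+r) mod 2 = r" using a by auto
  have j: "2*J+c < 2*m" "(2*J+c) div 2 = J" "(2*J+c) mod 2 = c" using J `c < 2` by auto
  have "(J + m - I) mod m = d" using a L1[of I m d] by simp
  show ?thesis unfolding Arr_def using i j a by (simp add: L1)
qed


lemma idecomp: "i = 2*(i div 2) + i mod 2" for i :: nat by simp

lemma two_inj: "2*(a::nat) + b = 2*a' + b' \<Longrightarrow> b < 2 \<Longrightarrow> b' < 2 \<Longrightarrow> a = a' \<and> b = b'"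
  by presburger

lemma two_lt: "(a::nat) < m \<Longrightarrow> b < 2 \<Longrightarrow> 2*a+b < 2*m" by linarith

lemma row_bij:
  assumes "i < 2*m"
  shows "bij_betw (\<lambda>p. 2*((i div 2 + fst p) mod m) + snd p)
     {p \<in> {..<m}\<times>{..<2}. cv m T (i div 2) (fst p) (i mod 2) (snd p) \<noteq> None}
     {j. j < 2*m \<and> Arr m T i j \<noteq> None}"
proof -
  let ?I = "i div 2" let ?r = "i mod 2"
  let ?h = "\<lambda>p. 2*((?I + fst p) mod m) + snd p"
  have I: "?I < m" using assms by simp
  have r: "?r < 2" by simp
  have acc: "Arr m T i (?h p) = cv m T ?I (fst p) ?r (snd p)" if "p \<in> {..<m}\<times>{..<2}" for p
    using access[of ?I m "fst p" ?r "snd p" "(?I + fst p) mod m" T] I r that idecomp[of i] by auto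
  show ?thesis
  proof (rule bij_betwI')
    fix x y assume x: "x \<in> {p \<in> {..<m}\<times>{..<2}. cv m T ?I (fst p) ?r (snd p) \<noteq> None}"
      and y: "y \<in> {p \<in> {..<m}\<times>{..<2}. cv m T ?I (fst p) ?r (snd p) \<noteq> None}"
    show "(?h x = ?h y) = (x = y)"
    proof
      assume h: "?h x = ?h y"
      have hh: "snd x = snd y \<and> (?I + fst x) mod m = (?I + fst y) mod m"
        using two_inj[OF h] x y by auto
      then have "snd x = snd y" by simp
      moreover have "(?I + fst x) mod m = (?I + fst y) mod m" using hh by simp
      then have "((?I + fst x) mod m + m - ?I) mod m = ((?I + fst y) mod m + m - ?I) mod m" by simp
      then have "fst x = fst y" using L1[of ?I m "fst x"] L1[of ?I m "fst y"] I x y by auto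
      ultimately show "x = y" by (simp add: prod_eq_iff)
    qed simp
  next
    fix x assume x: "x \<in> {p \<in> {..<m}\<times>{..<2}. cv m T ?I (fst p) ?r (snd p) \<noteq> None}"
    have "(?I + fst x) mod m < m" using I by simp
    moreover have "snd x < 2" using x by auto
    ultimately have "?h x < 2*m" using two_lt by blast
    then show "?h x \<in> {j. j < 2*m \<and> Arr m T i j \<noteq> None}" using acc x by auto
  next
    fix j assume j: "j \<in> {j. j < 2*m \<and> Arr m T i j \<noteq> None}"
    let ?p = "((j div 2 + m - ?I) mod m, j mod 2)"
    have J: "j div 2 < m" using j by auto
    have e: "?h ?p = j" using L7[OF J I] by simp
    have "Arr m T i j = cv m T ?I (fst ?p) ?r (snd ?p)" using j assms unfolding Arr_def by simp
    then show "\<exists>x\<in>{p \<in> {..<m}\<times>{..<2}. cv m T ?I (fst p) ?r (snd p) \<noteq> None}. j = ?h x"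
      using e j I by (intro bexI[of _ ?p]) auto
  qed
qed

lemma row_acc:
  assumes "i < 2*m" "p \<in> {..<m}\<times>{..<2}"
  shows "Arr m T i (2*((i div 2 + fst p) mod m) + snd p) = cv m T (i div 2) (fst p) (i mod 2) (snd p)"
  using access[of "i div 2" m "fst p" "i mod 2" "snd p" "(i div 2 + fst p) mod m" T] assms idecomp[of i] by auto

lemma col_bij:
  assumes "j < 2*m"
  shows "bij_betw (\<lambda>p. 2*((j div 2 + m - fst p) mod m) + snd p)
     {p \<in> {..<m}\<times>{..<2}. cv m T ((j div 2 + m - fst p) mod m) (fst p) (snd p) (j mod 2) \<noteq> None}
     {i. i < 2*m \<and> Arr m T i j \<noteq> None}"
proof -
  let ?J = "j div 2" let ?c = "j mod 2"
  let ?h = "\<lambda>p. 2*((?J + m - fst p) mod m) + snd p"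
  have J: "?J < m" using assms by simp
  have c: "?c < 2" by simp
  have acc: "Arr m T (?h p) j = cv m T ((?J + m - fst p) mod m) (fst p) (snd p) ?c" if "p \<in> {..<m}\<times>{..<2}" for p
  proof -
    have m0: "0 < m" using J by simp
    have "((?J + m - fst p) mod m + fst p) mod m = ?J" using L6[of ?J m "fst p"] J that by auto
    then show ?thesis
      using access[of "(?J + m - fst p) mod m" m "fst p" "snd p" ?c ?J T] m0 c that idecomp[of j] by auto
  qed
  show ?thesis
  proof (rule bij_betwI')
    fix x y assume x: "x \<in> {p \<in> {..<m}\<times>{..<2}. cv m T ((?J + m - fst p) mod m) (fst p) (snd p) ?c \<noteq> None}"
      and y: "y \<in> {p \<in> {..<m}\<times>{..<2}. cv m T ((?J + m - fst p) mod m) (fst p) (snd p) ?c \<noteq> None}"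
    show "(?h x = ?h y) = (x = y)"
    proof
      assume h: "?h x = ?h y"
      have hh: "snd x = snd y \<and> (?J + m - fst x) mod m = (?J + m - fst y) mod m"
        using two_inj[OF h] x y by auto
      then have "snd x = snd y" by simp
      moreover have "(?J + m - fst x) mod m = (?J + m - fst y) mod m" using hh by simp
      then have "(?J + m - (?J + m - fst x) mod m) mod m = (?J + m - (?J + m - fst y) mod m) mod m" by simp
      then have "fst x = fst y" using L3[of ?J m "fst x"] L3[of ?J m "fst y"] J x y by auto
      ultimately show "x = y" by (simp add: prod_eq_iff)
    qed simp
  next
    fix x assume x: "x \<in> {p \<in> {..<m}\<times>{..<2}. cv m T ((?J + m - fst p) mod m) (fst p) (snd p) ?c \<noteq> None}"
    have "(?J + m - fst x) mod m < m" using J by simp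
    moreover have "snd x < 2" using x by auto
    ultimately have "?h x < 2*m" using two_lt by blast
    then show "?h x \<in> {i. i < 2*m \<and> Arr m T i j \<noteq> None}" using acc x by auto
  next
    fix i assume i: "i \<in> {i. i < 2*m \<and> Arr m T i j \<noteq> None}"
    let ?p = "((?J + m - i div 2) mod m, i mod 2)"
    have I: "i div 2 < m" using i by auto
    have e: "?h ?p = i" using L3[OF J I] by simp
    have "Arr m T i j = cv m T (i div 2) (fst ?p) (snd ?p) ?c" using i assms unfolding Arr_def by simp
    moreover have "(?J + m - fst ?p) mod m = i div 2" using L3[OF J I] by simp
    ultimately have "Arr m T i j = cv m T ((?J + m - fst ?p) mod m) (fst ?p) (snd ?p) ?c" by simp
    then show "\<exists>x\<in>{p \<in> {..<m}\<times>{..<2}. cv m T ((?J + m - fst p) mod m) (fst p) (snd p) ?c \<noteq> None}. i = ?h x"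
      using e i J by (intro bexI[of _ ?p]) auto
  qed
qed

lemma col_acc:
  assumes "j < 2*m" "p \<in> {..<m}\<times>{..<2}"
  shows "Arr m T (2*((j div 2 + m - fst p) mod m) + snd p) j = cv m T ((j div 2 + m - fst p) mod m) (fst p) (snd p) (j mod 2)"
proof -
  have J: "j div 2 < m" using assms by simp
  have "((j div 2 + m - fst p) mod m + fst p) mod m = j div 2" using L6[of "j div 2" m "fst p"] J assms by auto
  then show ?thesis
    using access[of "(j div 2 + m - fst p) mod m" m "fst p" "snd p" "j mod 2" "j div 2" T] J assms idecomp[of j] by auto
qed



definition v0 :: "nat \<Rightarrow> nat \<Rightarrow> nat \<Rightarrow> nat \<Rightarrow> nat \<Rightarrow> nat \<Rightarrow> int" where
  "v0 m T I d r c = (case cv m T I d r c of None \<Rightarrow> 0 | Some v \<Rightarrow> v)"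

definition ind :: "nat \<Rightarrow> nat \<Rightarrow> nat \<Rightarrow> nat \<Rightarrow> nat \<Rightarrow> nat \<Rightarrow> nat" where
  "ind m T I d r c = (if cv m T I d r c = None then 0 else 1)"

lemma sum_pat:
  fixes f :: "nat \<Rightarrow> int"
  assumes "1 \<le> T" "\<And>d. 3 \<le> d \<Longrightarrow> d \<le> 2*T \<Longrightarrow> f d = (if even d then -e else e)"
  shows "(\<Sum>d<2*T+1. f d) = f 0 + f 1 + f 2"
  using assms
proof (induction T rule: nat_induct_at_least)
  case base
  then show ?case by (simp add: eval_nat_numeral)
next
  case (Suc T)
  have "(\<Sum>d<2*Suc T+1. f d) = (\<Sum>d<2*T+1. f d) + f (2*T+1) + f (2*T+2)"
    by (simp add: eval_nat_numeral)
  moreover have "f (2*T+1) = e" using Suc.prems(1)[of "2*T+1"] Suc.hyps by simp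
  moreover have "f (2*T+2) = -e" using Suc.prems(1)[of "2*T+2"] Suc.hyps by simp
  moreover have "(\<Sum>d<2*T+1. f d) = f 0 + f 1 + f 2" using Suc by simp
  ultimately show ?case by simp
qed

lemma sum_cnt:
  fixes f :: "nat \<Rightarrow> nat"
  assumes "1 \<le> T" "\<And>d. 3 \<le> d \<Longrightarrow> d \<le> 2*T \<Longrightarrow> f d = 2"
  shows "(\<Sum>d<2*T+1. f d) + 4 = f 0 + f 1 + f 2 + 4*T"
  using assms
proof (induction T rule: nat_induct_at_least)
  case base
  then show ?case by (simp add: eval_nat_numeral)
next
  case (Suc T)
  have "(\<Sum>d<2*Suc T+1. f d) = (\<Sum>d<2*T+1. f d) + f (2*T+1) + f (2*T+2)"
    by (simp add: eval_nat_numeral)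
  moreover have "f (2*T+1) = 2" using Suc.prems(1)[of "2*T+1"] Suc.hyps by simp
  moreover have "f (2*T+2) = 2" using Suc.prems(1)[of "2*T+2"] Suc.hyps by simp
  moreover have "(\<Sum>d<2*T+1. f d) + 4 = f 0 + f 1 + f 2 + 4*T" using Suc by simp
  ultimately show ?case by simp
qed

lemma trunc_sum:
  fixes f :: "nat \<Rightarrow> 'a::comm_monoid_add"
  assumes "2*T+1 \<le> m" "\<And>d. 2*T+1 \<le> d \<Longrightarrow> f d = 0"
  shows "(\<Sum>d<m. f d) = (\<Sum>d<2*T+1. f d)"
  by (rule sum.mono_neutral_left[symmetric]) (use assms in auto)

lemma rect_sum:
  fixes g :: "nat \<times> nat \<Rightarrow> 'a::comm_monoid_add"
  shows "(\<Sum>p\<in>{..<(m::nat)}\<times>{..<(2::nat)}. g p) = (\<Sum>d<m. g (d,0) + g (d,1))"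
proof -
  have "(\<Sum>d<m. \<Sum>c<(2::nat). g (d,c)) = (\<Sum>(d,c)\<in>{..<m}\<times>{..<2}. g (d,c))" by (rule sum.cartesian_product)
  then have "sum g ({..<m}\<times>{..<2}) = (\<Sum>d<m. \<Sum>c<(2::nat). g (d,c))" by (simp add: case_prod_eta)
  moreover have "(\<Sum>c<(2::nat). g (d,c)) = g (d,0) + g (d,1)" for d by (simp add: eval_nat_numeral)
  ultimately show ?thesis by simp
qed

lemma filt_sum:
  "(\<Sum>p\<in>{p \<in> {..<(m::nat)}\<times>{..<(2::nat)}. P p}. the (h p)) = (\<Sum>p\<in>{..<m}\<times>{..<2}. if P p then the (h p) else 0)"
  by (rule sum.inter_filter) (rule finite_cartesian_product; simp)

lemma filt_card:
  "card {p \<in> {..<(m::nat)}\<times>{..<(2::nat)}. P p} = (\<Sum>p\<in>{..<m}\<times>{..<2}. if P p then 1 else 0)"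
proof -
  have f: "finite ({..<(m::nat)}\<times>{..<(2::nat)})" by (rule finite_cartesian_product; simp)
  have "card {p \<in> {..<(m::nat)}\<times>{..<(2::nat)}. P p} = (\<Sum>p\<in>{p \<in> {..<(m::nat)}\<times>{..<(2::nat)}. P p}. 1)"
    by (rule card_eq_sum)
  also have "\<dots> = (\<Sum>p\<in>{..<m}\<times>{..<2}. if P p then 1 else 0)"
    by (rule sum.inter_filter[OF f])
  finally show ?thesis .
qed



lemma row_ext:
  assumes "3 \<le> d" "d \<le> 2*T" "r < 2"
  shows "v0 m T I d r 0 + v0 m T I d r 1 = (if even d then -(if r = 0 then -1 else 1) else (if r = 0 then -1 else 1))"
  using assms unfolding v0_def cv_def Let_def by (cases "r = 0") auto

lemma row_zero:
  assumes "2*T+1 \<le> d" "1 \<le> T"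
  shows "v0 m T I d r 0 + v0 m T I d r 1 = 0"
  using assms unfolding v0_def cv_def Let_def by auto

lemma row_core:
  assumes "I < m" "r < 2" "2 \<le> m"
  shows "(v0 m T I 0 r 0 + v0 m T I 0 r 1) + (v0 m T I 1 r 0 + v0 m T I 1 r 1) + (v0 m T I 2 r 0 + v0 m T I 2 r 1)
     = (if r = 0 then -(2 * int (2*m*(4*T+1)) + 1) else 0)"
  using assms unfolding v0_def cv_def Let_def by (cases "r = 0") auto

lemma row_ind_ext:
  assumes "3 \<le> d" "d \<le> 2*T"
  shows "ind m T I d r 0 + ind m T I d r 1 = 2"
  using assms unfolding ind_def cv_def Let_def by auto

lemma row_ind_zero:
  assumes "2*T+1 \<le> d" "1 \<le> T"
  shows "ind m T I d r 0 + ind m T I d r 1 = 0"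
  using assms unfolding ind_def cv_def Let_def by auto

lemma row_ind_core:
  assumes "r < 2"
  shows "(ind m T I 0 r 0 + ind m T I 0 r 1) + (ind m T I 1 r 0 + ind m T I 1 r 1) + (ind m T I 2 r 0 + ind m T I 2 r 1) = 5"
  using assms unfolding ind_def cv_def Let_def by (cases "r = 0") auto

lemma col_ext:
  assumes "3 \<le> d" "d \<le> 2*T" "c < 2"
  shows "v0 m T I d 0 c + v0 m T I d 1 c = (if even d then -(if c = 0 then -2 else 2) else (if c = 0 then -2 else 2))"
  using assms unfolding v0_def cv_def Let_def by (cases "c = 0") auto

lemma col_zero:
  assumes "2*T+1 \<le> d" "1 \<le> T"
  shows "v0 m T I d 0 c + v0 m T I d 1 c = 0"
  using assms unfolding v0_def cv_def Let_def by auto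

lemma col_ind_ext:
  assumes "3 \<le> d" "d \<le> 2*T"
  shows "ind m T I d 0 c + ind m T I d 1 c = 2"
  using assms unfolding ind_def cv_def Let_def by auto

lemma col_ind_zero:
  assumes "2*T+1 \<le> d" "1 \<le> T"
  shows "ind m T I d 0 c + ind m T I d 1 c = 0"
  using assms unfolding ind_def cv_def Let_def by auto

lemma col_ind_core:
  assumes "c < 2"
  shows "(ind m T I0 0 0 c + ind m T I0 0 1 c) + (ind m T I1 1 0 c + ind m T I1 1 1 c) + (ind m T I2 2 0 c + ind m T I2 2 1 c) = 5"
  using assms unfolding ind_def cv_def Let_def by (cases "c = 0") auto

lemma col_core:
  assumes "J < m" "c < 2" "2 \<le> m"
  shows "(v0 m T ((J+m-0) mod m) 0 0 c + v0 m T ((J+m-0) mod m) 0 1 c)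
       + (v0 m T ((J+m-1) mod m) 1 0 c + v0 m T ((J+m-1) mod m) 1 1 c)
       + (v0 m T ((J+m-2) mod m) 2 0 c + v0 m T ((J+m-2) mod m) 2 1 c)
     = (if c = 0 then -(2 * int (2*m*(4*T+1)) + 1) else 0)"
proof -
  have u: "((J+m-1) mod m + m - 1) mod m = (J + m - 2) mod m" using L5 assms by simp
  have j0: "(J+m-0) mod m = J" using assms by simp
  show ?thesis using assms unfolding v0_def cv_def Let_def u j0 by (cases "c = 0") auto
qed



lemma v0_alt: "(if cv m T I d r c \<noteq> None then the (cv m T I d r c) else 0) = v0 m T I d r c"
  unfolding v0_def by (cases "cv m T I d r c") auto

lemma ind_alt: "(if cv m T I d r c \<noteq> None then 1 else 0) = ind m T I d r c"
  unfolding ind_def by auto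

lemma modz: "(if P then -(X::int) else 0) mod X = 0" by simp

lemma row_props:
  assumes "i < 2*m" "1 \<le> T" "2*T+1 \<le> m"
  shows "card {j. j < 2*m \<and> Arr m T i j \<noteq> None} = 4*T+1"
    and "(\<Sum>j\<in>{j. j < 2*m \<and> Arr m T i j \<noteq> None}. the (Arr m T i j)) mod (2 * int (2*m) * int (4*T+1) + 1) = 0"
proof -
  let ?I = "i div 2" let ?r = "i mod 2"
  let ?S = "{j. j < 2*m \<and> Arr m T i j \<noteq> None}"
  let ?F = "{p \<in> {..<m}\<times>{..<2}. cv m T ?I (fst p) ?r (snd p) \<noteq> None}"
  let ?h = "\<lambda>p. 2*((?I + fst p) mod m) + snd p"
  have bij: "bij_betw ?h ?F ?S" using row_bij[OF assms(1)] .
  have I: "?I < m" using assms by simp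
  have r: "?r < 2" by simp
  have m2: "2 \<le> m" using assms by simp
  have "card ?S = card ?F" using bij_betw_same_card[OF bij] by simp
  also have "\<dots> = (\<Sum>p\<in>{..<m}\<times>{..<2}. if cv m T ?I (fst p) ?r (snd p) \<noteq> None then 1 else 0)"
    by (rule filt_card)
  also have "\<dots> = (\<Sum>p\<in>{..<m}\<times>{..<2}. ind m T ?I (fst p) ?r (snd p))"
    using ind_alt by presburger
  also have "\<dots> = (\<Sum>d<m. ind m T ?I d ?r 0 + ind m T ?I d ?r 1)"
    using rect_sum[of "\<lambda>p. ind m T ?I (fst p) ?r (snd p)" m] by simp
  also have "\<dots> = (\<Sum>d<2*T+1. ind m T ?I d ?r 0 + ind m T ?I d ?r 1)"
    by (rule trunc_sum) (use assms row_ind_zero in auto)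
  also have "\<dots> = 4*T+1"
  proof -
    have "(\<Sum>d<2*T+1. ind m T ?I d ?r 0 + ind m T ?I d ?r 1) + 4 =
       (ind m T ?I 0 ?r 0 + ind m T ?I 0 ?r 1) + (ind m T ?I 1 ?r 0 + ind m T ?I 1 ?r 1) + (ind m T ?I 2 ?r 0 + ind m T ?I 2 ?r 1) + 4*T"
      by (rule sum_cnt) (use assms row_ind_ext in auto)
    then show ?thesis using row_ind_core[OF r, of m T ?I] by simp
  qed
  finally show "card ?S = 4*T+1" .
  have "(\<Sum>j\<in>?S. the (Arr m T i j)) = (\<Sum>p\<in>?F. the (Arr m T i (?h p)))"
    using sum.reindex_bij_betw[OF bij, of "\<lambda>j. the (Arr m T i j)"] by simp
  also have "\<dots> = (\<Sum>p\<in>?F. the (cv m T ?I (fst p) ?r (snd p)))"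
    by (rule sum.cong) (use row_acc[OF assms(1)] in auto)
  also have "\<dots> = (\<Sum>p\<in>{..<m}\<times>{..<2}. if cv m T ?I (fst p) ?r (snd p) \<noteq> None then the (cv m T ?I (fst p) ?r (snd p)) else 0)"
    by (rule filt_sum)
  also have "\<dots> = (\<Sum>p\<in>{..<m}\<times>{..<2}. v0 m T ?I (fst p) ?r (snd p))"
    using v0_alt by presburger
  also have "\<dots> = (\<Sum>d<m. v0 m T ?I d ?r 0 + v0 m T ?I d ?r 1)"
    using rect_sum[of "\<lambda>p. v0 m T ?I (fst p) ?r (snd p)" m] by simp
  also have "\<dots> = (\<Sum>d<2*T+1. v0 m T ?I d ?r 0 + v0 m T ?I d ?r 1)"
    by (rule trunc_sum) (use assms row_zero in auto)
  also have "\<dots> = (v0 m T ?I 0 ?r 0 + v0 m T ?I 0 ?r 1) + (v0 m T ?I 1 ?r 0 + v0 m T ?I 1 ?r 1) + (v0 m T ?I 2 ?r 0 + v0 m T ?I 2 ?r 1)"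
    by (rule sum_pat[where e = "if ?r = 0 then -1 else 1"]) (use assms row_ext[OF _ _ r] in auto)
  also have "\<dots> = (if ?r = 0 then -(2 * int (2*m*(4*T+1)) + 1) else 0)"
    by (rule row_core[OF I r m2])
  finally have e: "(\<Sum>j\<in>?S. the (Arr m T i j)) = (if ?r = 0 then -(2 * int (2*m*(4*T+1)) + 1) else 0)" .
  show "(\<Sum>j\<in>?S. the (Arr m T i j)) mod (2 * int (2*m) * int (4*T+1) + 1) = 0"
  proof -
    have M: "2 * int (2*m*(4*T+1)) + 1 = 2 * int (2*m) * int (4*T+1) + 1" by (simp add: algebra_simps)
    have z: "(-(X::int)) mod X = 0" for X by simp
    show ?thesis unfolding e M by (rule modz)
  qed
qed

lemma col_props:
  assumes "j < 2*m" "1 \<le> T" "2*T+1 \<le> m"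
  shows "card {i. i < 2*m \<and> Arr m T i j \<noteq> None} = 4*T+1"
    and "(\<Sum>i\<in>{i. i < 2*m \<and> Arr m T i j \<noteq> None}. the (Arr m T i j)) mod (2 * int (2*m) * int (4*T+1) + 1) = 0"
proof -
  let ?J = "j div 2" let ?c = "j mod 2"
  let ?S = "{i. i < 2*m \<and> Arr m T i j \<noteq> None}"
  let ?F = "{p \<in> {..<m}\<times>{..<2}. cv m T ((?J + m - fst p) mod m) (fst p) (snd p) ?c \<noteq> None}"
  let ?h = "\<lambda>p. 2*((?J + m - fst p) mod m) + snd p"
  have bij: "bij_betw ?h ?F ?S" using col_bij[OF assms(1)] .
  have J: "?J < m" using assms by simp
  have c: "?c < 2" by simp
  have m2: "2 \<le> m" using assms by simp
  have "card ?S = card ?F" using bij_betw_same_card[OF bij] by simp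
  also have "\<dots> = (\<Sum>p\<in>{..<m}\<times>{..<2}. if cv m T ((?J + m - fst p) mod m) (fst p) (snd p) ?c \<noteq> None then 1 else 0)"
    by (rule filt_card)
  also have "\<dots> = (\<Sum>p\<in>{..<m}\<times>{..<2}. ind m T ((?J + m - fst p) mod m) (fst p) (snd p) ?c)"
    using ind_alt by presburger
  also have "\<dots> = (\<Sum>d<m. ind m T ((?J + m - d) mod m) d 0 ?c + ind m T ((?J + m - d) mod m) d 1 ?c)"
    using rect_sum[of "\<lambda>p. ind m T ((?J + m - fst p) mod m) (fst p) (snd p) ?c" m] by simp
  also have "\<dots> = (\<Sum>d<2*T+1. ind m T ((?J + m - d) mod m) d 0 ?c + ind m T ((?J + m - d) mod m) d 1 ?c)"
    by (rule trunc_sum) (use assms col_ind_zero in auto)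
  also have "\<dots> = 4*T+1"
  proof -
    have "(\<Sum>d<2*T+1. ind m T ((?J + m - d) mod m) d 0 ?c + ind m T ((?J + m - d) mod m) d 1 ?c) + 4 =
       (ind m T ((?J + m - 0) mod m) 0 0 ?c + ind m T ((?J + m - 0) mod m) 0 1 ?c)
     + (ind m T ((?J + m - 1) mod m) 1 0 ?c + ind m T ((?J + m - 1) mod m) 1 1 ?c)
     + (ind m T ((?J + m - 2) mod m) 2 0 ?c + ind m T ((?J + m - 2) mod m) 2 1 ?c) + 4*T"
      by (rule sum_cnt) (use assms col_ind_ext in auto)
    then show ?thesis using col_ind_core[OF c, of m T "(?J + m - 0) mod m" "(?J + m - 1) mod m" "(?J + m - 2) mod m"] by simp
  qed
  finally show "card ?S = 4*T+1" .
  have "(\<Sum>i\<in>?S. the (Arr m T i j)) = (\<Sum>p\<in>?F. the (Arr m T (?h p) j))"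
    using sum.reindex_bij_betw[OF bij, of "\<lambda>i. the (Arr m T i j)"] by simp
  also have "\<dots> = (\<Sum>p\<in>?F. the (cv m T ((?J + m - fst p) mod m) (fst p) (snd p) ?c))"
    by (rule sum.cong) (use col_acc[OF assms(1)] in auto)
  also have "\<dots> = (\<Sum>p\<in>{..<m}\<times>{..<2}. if cv m T ((?J + m - fst p) mod m) (fst p) (snd p) ?c \<noteq> None then the (cv m T ((?J + m - fst p) mod m) (fst p) (snd p) ?c) else 0)"
    by (rule filt_sum)
  also have "\<dots> = (\<Sum>p\<in>{..<m}\<times>{..<2}. v0 m T ((?J + m - fst p) mod m) (fst p) (snd p) ?c)"
    using v0_alt by presburger
  also have "\<dots> = (\<Sum>d<m. v0 m T ((?J + m - d) mod m) d 0 ?c + v0 m T ((?J + m - d) mod m) d 1 ?c)"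
    using rect_sum[of "\<lambda>p. v0 m T ((?J + m - fst p) mod m) (fst p) (snd p) ?c" m] by simp
  also have "\<dots> = (\<Sum>d<2*T+1. v0 m T ((?J + m - d) mod m) d 0 ?c + v0 m T ((?J + m - d) mod m) d 1 ?c)"
    by (rule trunc_sum) (use assms col_zero in auto)
  also have "\<dots> = (v0 m T ((?J + m - 0) mod m) 0 0 ?c + v0 m T ((?J + m - 0) mod m) 0 1 ?c)
     + (v0 m T ((?J + m - 1) mod m) 1 0 ?c + v0 m T ((?J + m - 1) mod m) 1 1 ?c)
     + (v0 m T ((?J + m - 2) mod m) 2 0 ?c + v0 m T ((?J + m - 2) mod m) 2 1 ?c)"
    by (rule sum_pat[where e = "if ?c = 0 then -2 else 2"]) (use assms col_ext[OF _ _ c] in auto)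
  also have "\<dots> = (if ?c = 0 then -(2 * int (2*m*(4*T+1)) + 1) else 0)"
    by (rule col_core[OF J c m2])
  finally have e: "(\<Sum>i\<in>?S. the (Arr m T i j)) = (if ?c = 0 then -(2 * int (2*m*(4*T+1)) + 1) else 0)" .
  show "(\<Sum>i\<in>?S. the (Arr m T i j)) mod (2 * int (2*m) * int (4*T+1) + 1) = 0"
  proof -
    have M: "2 * int (2*m*(4*T+1)) + 1 = 2 * int (2*m) * int (4*T+1) + 1" by (simp add: algebra_simps)
    show ?thesis unfolding e M by (rule modz)
  qed
qed



definition good :: "nat \<Rightarrow> nat \<Rightarrow> int \<Rightarrow> bool" where
  "good m T x \<longleftrightarrow> (\<exists>I d r c v. I < m \<and> d < m \<and> r < 2 \<and> c < 2 \<and> cv m T I d r c = Some v \<and> \<bar>v\<bar> = x)"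

lemma goodI: "I < m \<Longrightarrow> d < m \<Longrightarrow> r < 2 \<Longrightarrow> c < 2 \<Longrightarrow> cv m T I d r c = Some v \<Longrightarrow> \<bar>v\<bar> = x \<Longrightarrow> good m T x"
  unfolding good_def by blast

lemma cv011: "cv m T I 0 1 1 = Some (int m - int I)" unfolding cv_def Let_def by simp
lemma cv001: "cv m T I 0 0 1 = Some (- 5 * int m + int I)" unfolding cv_def Let_def by simp
lemma cv010: "cv m T I 0 1 0 = Some (8 * int m - int I)" unfolding cv_def Let_def by simp
lemma cv000: "cv m T I 0 0 0 = Some (- (int (2*m*(4*T+1)) - int I))" unfolding cv_def Let_def by simp
lemma cv111: "cv m T I 1 1 1 = Some (2 * int m - int ((I + m - 1) mod m))" unfolding cv_def Let_def by simp
lemma cv101: "cv m T I 1 0 1 = Some (6 * int m - int ((I + m - 1) mod m))" unfolding cv_def Let_def by simp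
lemma cv110: "cv m T I 1 1 0 = Some (-7 * int m + int ((I + m - 1) mod m))" unfolding cv_def Let_def by simp
lemma cv100: "cv m T I 1 0 0 = Some (- (int (2*m*(4*T+1)) - int m - int ((I + m - 1) mod m)))" unfolding cv_def Let_def by simp
lemma cv200: "cv m T I 2 0 0 = Some (- (2 * int m + 1 + 2 * int I))" unfolding cv_def Let_def by simp
lemma cv211: "cv m T I 2 1 1 = Some (-4 * int m + 2 * int I)" unfolding cv_def Let_def by simp
lemma cvext0: "3 \<le> d \<Longrightarrow> d \<le> 2*T \<Longrightarrow>
   cv m T I d r c = Some ((if even d then -1 else 1) * (let X = 8 * int m + 1 + 4*(int (d-3) * int m + int I) in
       if r = 0 then (if c = 0 then X else -(X+1)) else (if c=0 then -(X+2) else X+3)))"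
  unfolding cv_def Let_def by simp

lemma absent: "0 \<le> (X::int) \<Longrightarrow> r < 2 \<Longrightarrow> c < 2 \<Longrightarrow>
   \<bar>(if e then -1 else 1) * (if r = 0 then (if c = 0 then X else -(X+1)) else (if c=0 then -(X+2) else X+3))\<bar> = X + int (2*r+c)"
  by (cases "r = 0"; cases "c = 0") (auto simp: abs_mult)

lemma cvext: "3 \<le> d \<Longrightarrow> d \<le> 2*T \<Longrightarrow> r < 2 \<Longrightarrow> c < 2 \<Longrightarrow>
   \<exists>v. cv m T I d r c = Some v \<and> \<bar>v\<bar> = 8 * int m + 1 + 4*(int (d-3) * int m + int I) + int (2*r + c)"
  using cvext0[of d T m I r c] absent[of "8 * int m + 1 + 4*(int (d-3) * int m + int I)" r c "even d"]
  unfolding Let_def by simp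

lemma good_u:
  assumes "2 \<le> m" "u < m" "\<And>I. I < m \<Longrightarrow> (I + m - 1) mod m = u \<Longrightarrow> good m T x"
  shows "good m T x"
  using assms(3)[of "(u+1) mod m"] L4[OF assms(1,2)] assms by simp

lemma surj_cv:
  assumes "1 \<le> T" "2*T+1 \<le> m" "1 \<le> x" "x \<le> int (2*m*(4*T+1))"
  shows "good m T x"
proof -
  have m2: "2 \<le> m" using assms by simp
  define N where "N = int (2*m*(4*T+1))"
  have Nv: "N = 2 * int m + 8 * int m * int T" unfolding N_def by (simp add: algebra_simps)
  have xN: "x \<le> N" using assms N_def by simp
  consider "x \<le> int m" | "int m < x \<and> x \<le> 2 * int m" | "2 * int m < x \<and> x \<le> 4 * int m \<and> odd x"
    | "2 * int m < x \<and> x \<le> 4 * int m \<and> even x" | "4 * int m < x \<and> x \<le> 5 * int m"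
    | "5 * int m < x \<and> x \<le> 6 * int m" | "6 * int m < x \<and> x \<le> 7 * int m" | "7 * int m < x \<and> x \<le> 8 * int m"
    | "8 * int m < x \<and> x \<le> N - 2 * int m" | "N - 2 * int m < x \<and> x \<le> N - int m" | "N - int m < x"
    by linarith
  then show ?thesis
  proof cases
    case 1
    let ?I = "nat (int m - x)"
    have I: "?I < m" using 1 assms  by auto
    have cv: "cv m T ?I 0 1 1 = Some (int m - int ?I)" by (rule cv011)
    show ?thesis by (rule goodI[OF I _ _ _ cv]) (use 1 assms m2  in auto)
  next
    case 2
    let ?u = "nat (2 * int m - x)"
    have u: "?u < m" using 2  m2 by auto
    show ?thesis
    proof (rule good_u[OF m2 u])
      fix I assume I: "I < m" "(I+m-1) mod m = ?u"
      have cv: "cv m T I 1 1 1 = Some (2 * int m - int ?u)" using cv111[of m T I] I by simp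
      show "good m T x" by (rule goodI[OF I(1) _ _ _ cv]) (use 2 assms m2  in auto)
    qed
  next
    case 3
    let ?I = "nat ((x - 2 * int m - 1) div 2)"
    have I: "?I < m" using 3 assms  by auto
    have cv: "cv m T ?I 2 0 0 = Some (- (2 * int m + 1 + 2 * int ?I))" by (rule cv200)
    show ?thesis by (rule goodI[OF I _ _ _ cv]) (use 3 assms m2  in auto)
  next
    case 4
    let ?I = "nat ((4 * int m - x) div 2)"
    have I: "?I < m" using 4 assms  by auto
    have cv: "cv m T ?I 2 1 1 = Some (-4 * int m + 2 * int ?I)" by (rule cv211)
    show ?thesis by (rule goodI[OF I _ _ _ cv]) (use 4 assms m2  in auto)
  next
    case 5
    let ?I = "nat (5 * int m - x)"
    have I: "?I < m" using 5 assms  by auto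
    have cv: "cv m T ?I 0 0 1 = Some (- 5 * int m + int ?I)" by (rule cv001)
    show ?thesis by (rule goodI[OF I _ _ _ cv]) (use 5 assms m2  in auto)
  next
    case 6
    let ?u = "nat (6 * int m - x)"
    have u: "?u < m" using 6  m2 by auto
    show ?thesis
    proof (rule good_u[OF m2 u])
      fix I assume I: "I < m" "(I+m-1) mod m = ?u"
      have cv: "cv m T I 1 0 1 = Some (6 * int m - int ?u)" using cv101[of m T I] I by simp
      show "good m T x" by (rule goodI[OF I(1) _ _ _ cv]) (use 6 assms m2  in auto)
    qed
  next
    case 7
    let ?u = "nat (7 * int m - x)"
    have u: "?u < m" using 7  m2 by auto
    show ?thesis
    proof (rule good_u[OF m2 u])
      fix I assume I: "I < m" "(I+m-1) mod m = ?u"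
      have cv: "cv m T I 1 1 0 = Some (-7 * int m + int ?u)" using cv110[of m T I] I by simp
      show "good m T x" by (rule goodI[OF I(1) _ _ _ cv]) (use 7 assms m2  in auto)
    qed
  next
    case 8
    let ?I = "nat (8 * int m - x)"
    have I: "?I < m" using 8 assms  by auto
    have cv: "cv m T ?I 0 1 0 = Some (8 * int m - int ?I)" by (rule cv010)
    show ?thesis by (rule goodI[OF I _ _ _ cv]) (use 8 assms m2  in auto)
  next
    case 9
    define y where "y = x - 8 * int m - 1"
    define q where "q = y div 4"
    define rr where "rr = y mod 4"
    define Q where "Q = q div int m"
    define R where "R = q mod int m"
    have mpos: "0 < int m" using m2 by simp
    have y0: "0 \<le> y" using 9 y_def by simp
    have yq: "y = 4*q + rr" unfolding q_def rr_def by simp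
    have rr: "0 \<le> rr" "rr < 4" unfolding rr_def by simp_all
    have q0: "0 \<le> q" using y0 unfolding q_def by simp
    have qQ: "q = Q * int m + R" unfolding Q_def R_def by simp
    have R: "0 \<le> R" "R < int m" unfolding R_def using mpos by simp_all
    have Q0: "0 \<le> Q" unfolding Q_def using q0 mpos by (simp add: div_int_pos_iff)
    have yb: "y \<le> 8 * int m * int T - 8 * int m - 1" using 9 y_def Nv by simp
    have Qb: "Q \<le> 2 * int T - 3"
    proof (rule ccontr)
      assume "\<not> Q \<le> 2 * int T - 3"
      then have "2 * int T - 2 \<le> Q" by simp
      then have "(2 * int T - 2) * int m \<le> Q * int m" using mpos by (simp add: mult_right_mono)
      then show False using yq qQ rr R yb by (simp add: algebra_simps)
    qed
    let ?d = "nat Q + 3" let ?I = "nat R" let ?r = "nat (rr div 2)" let ?c = "nat (rr mod 2)"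
    have d3: "3 \<le> ?d" by simp
    have dT: "?d \<le> 2*T" using Qb Q0 by presburger
    have dm: "?d < m" using dT assms by linarith
    have Im: "?I < m" using R by presburger
    have rr4: "rr = 0 \<or> rr = 1 \<or> rr = 2 \<or> rr = 3" using rr by auto
    have r2: "?r < 2" using rr4 by auto
    have c2: "?c < 2" using rr4 by auto
    obtain v where v: "cv m T ?I ?d ?r ?c = Some v"
      "\<bar>v\<bar> = 8 * int m + 1 + 4*(int (?d-3) * int m + int ?I) + int (2 * ?r + ?c)"
      using cvext[OF d3 dT r2 c2, of m ?I] by blast
    have e1: "int (?d - 3) = Q" using Q0 by simp
    have e2: "int ?I = R" using R by simp
    have e3: "int (2 * ?r + ?c) = rr" using rr4 by auto
    have "\<bar>v\<bar> = x" using v(2) unfolding e1 e2 e3 using yq qQ y_def by (simp add: algebra_simps)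
    then show ?thesis by (rule goodI[OF Im dm r2 c2 v(1)])
  next
    case 10
    let ?u = "nat (N - int m - x)"
    have u: "?u < m" using 10 N_def xN m2 by auto
    show ?thesis
    proof (rule good_u[OF m2 u])
      fix I assume I: "I < m" "(I+m-1) mod m = ?u"
      have cv: "cv m T I 1 0 0 = Some (- (int (2*m*(4*T+1)) - int m - int ?u))" using cv100[of m T I] I by simp
      show "good m T x" by (rule goodI[OF I(1) _ _ _ cv]) (use 10 assms m2 N_def xN in auto)
    qed
  next
    case 11
    let ?I = "nat (N - x)"
    have I: "?I < m" using 11 assms N_def xN by auto
    have cv: "cv m T ?I 0 0 0 = Some (- (int (2*m*(4*T+1)) - int ?I))" by (rule cv000)
    show ?thesis by (rule goodI[OF I _ _ _ cv]) (use 11 assms m2 N_def xN in auto)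
  qed
qed



lemma good_cell:
  assumes "good m T x"
  shows "\<exists>i j v. i < 2*m \<and> j < 2*m \<and> Arr m T i j = Some v \<and> \<bar>v\<bar> = x"
proof -
  obtain I d r c v where h: "I < m" "d < m" "r < 2" "c < 2" "cv m T I d r c = Some v" "\<bar>v\<bar> = x"
    using assms unfolding good_def by blast
  have m0: "0 < m" using h by simp
  have a: "Arr m T (2*I+r) (2*((I+d) mod m)+c) = Some v" using access[OF h(1-4), of "(I+d) mod m" T] h(5) by simp
  have "2*I+r < 2*m" using two_lt h by blast
  moreover have "2*((I+d) mod m)+c < 2*m" using two_lt[of "(I+d) mod m" m c] m0 h by simp
  ultimately show ?thesis using a h(6) by blast
qed

lemma main:
  assumes T1: "1 \<le> T" and Tm: "2*T+1 \<le> m"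
  shows "heffter (2*m) (4*T+1) (Arr m T)"
proof -
  define F where "F = {p. fst p < 2*m \<and> snd p < 2*m \<and> Arr m T (fst p) (snd p) \<noteq> None}"
  define g where "g = (\<lambda>p. \<bar>the (Arr m T (fst p) (snd p))\<bar>)"
  define N where "N = int (2*m*(4*T+1))"
  have Fs: "F = Sigma {..<2*m} (\<lambda>i. {j. j < 2*m \<and> Arr m T i j \<noteq> None})" unfolding F_def by auto
  have finF: "finite F" unfolding Fs by (rule finite_SigmaI) auto
  have cardF: "card F = 2*m*(4*T+1)"
  proof -
    have "card F = (\<Sum>i<2*m. card {j. j < 2*m \<and> Arr m T i j \<noteq> None})"
      unfolding Fs by (rule card_SigmaI) auto
    also have "\<dots> = (\<Sum>i<2*m. 4*T+1)" by (rule sum.cong) (use row_props(1)[OF _ T1 Tm] in auto)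
    finally show ?thesis by simp
  qed
  have sub: "{1..N} \<subseteq> g ` F"
  proof
    fix x assume x: "x \<in> {1..N}"
    then have "good m T x" using surj_cv[OF T1 Tm, of x] N_def by auto
    then obtain i j v where h: "i < 2*m" "j < 2*m" "Arr m T i j = Some v" "\<bar>v\<bar> = x"
      using good_cell by blast
    then have "(i,j) \<in> F" "g (i,j) = x" unfolding F_def g_def by auto
    then show "x \<in> g ` F" by force
  qed
  have cardN: "card {1..N} = card F"
  proof -
    have "card {1..N} = nat N" by simp
    moreover have "nat N = 2*m*(4*T+1)" unfolding N_def by (rule nat_int)
    ultimately show ?thesis using cardF by simp
  qed
  have cg: "card (g ` F) = card F"
  proof -
    have "card {1..N} \<le> card (g ` F)" using card_mono[OF finite_imageI[OF finF] sub] .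
    moreover have "card (g ` F) \<le> card F" by (rule card_image_le[OF finF])
    ultimately show ?thesis using cardN by simp
  qed
  have inj: "inj_on g F" using eq_card_imp_inj_on[OF finF cg] .
  have nz: "v \<noteq> 0" if "i < 2*m" "j < 2*m" "Arr m T i j = Some v" for i j v
  proof
    assume v0: "v = 0"
    then have "(i,j) \<in> F" "g (i,j) = 0" unfolding F_def g_def using that by auto
    then have "insert 0 {1..N} \<subseteq> g ` F" using sub by force
    then have "card (insert 0 {1..N}) \<le> card (g ` F)" using card_mono[OF finite_imageI[OF finF]] by blast
    moreover have "card (insert 0 {1..N}) = card {1..N} + 1" by simp
    ultimately show False using cg cardN by simp
  qed
  show ?thesis
    unfolding heffter_def
  proof (intro conjI allI impI)
    fix i j assume "2*m \<le> i \<or> 2*m \<le> j"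
    then show "Arr m T i j = None" unfolding Arr_def by auto
  next
    fix i j v assume "i < 2*m" "j < 2*m" "Arr m T i j = Some v"
    then show "v \<noteq> 0" using nz by blast
  next
    fix i assume "i < 2*m"
    then show "card {j. j < 2*m \<and> Arr m T i j \<noteq> None} = 4*T+1" using row_props(1) T1 Tm by blast
  next
    fix j assume "j < 2*m"
    then show "card {i. i < 2*m \<and> Arr m T i j \<noteq> None} = 4*T+1" using col_props(1) T1 Tm by blast
  next
    fix i assume "i < 2*m"
    then show "(\<Sum>j\<in>{j. j < 2*m \<and> Arr m T i j \<noteq> None}. the (Arr m T i j)) mod (2 * int (2*m) * int (4*T+1) + 1) = 0"
      using row_props(2) T1 Tm by blast
  next
    fix j assume "j < 2*m"
    then show "(\<Sum>i\<in>{i. i < 2*m \<and> Arr m T i j \<noteq> None}. the (Arr m T i j)) mod (2 * int (2*m) * int (4*T+1) + 1) = 0"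
      using col_props(2) T1 Tm by blast
  next
    fix x :: int assume x: "1 \<le> x \<and> x \<le> int (2*m) * int (4*T+1)"
    then have "x \<in> {1..N}" unfolding N_def by (simp add: algebra_simps)
    then obtain p where p: "p \<in> F" "g p = x" using sub by blast
    then obtain v where v: "Arr m T (fst p) (snd p) = Some v" unfolding F_def by auto
    have "\<bar>v\<bar> = x" using p(2) v unfolding g_def by simp
    then have pv: "Arr m T (fst p) (snd p) = Some x \<or> Arr m T (fst p) (snd p) = Some (-x)" using v by auto
    show "\<exists>!p. fst p < 2*m \<and> snd p < 2*m \<and> (Arr m T (fst p) (snd p) = Some x \<or> Arr m T (fst p) (snd p) = Some (- x))"
    proof (rule ex1I[of _ p])
      show "fst p < 2*m \<and> snd p < 2*m \<and> (Arr m T (fst p) (snd p) = Some x \<or> Arr m T (fst p) (snd p) = Some (- x))"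
        using p(1) pv unfolding F_def by auto
    next
      fix q assume q: "fst q < 2*m \<and> snd q < 2*m \<and> (Arr m T (fst q) (snd q) = Some x \<or> Arr m T (fst q) (snd q) = Some (- x))"
      then have "q \<in> F" unfolding F_def by auto
      moreover have "g q = x" using q x unfolding g_def by auto
      ultimately show "q = p" using inj p unfolding inj_on_def by metis
    qed
  qed
qed

theorem theorem7p2:
  fixes n k :: nat
  assumes "n mod 4 = 2" and "n \<ge> 6" and "k mod 4 = 1" and "5 \<le> k" and "k < n"
  shows "\<exists>A. heffter n k A"
proof -
  define m where "m = n div 2"
  define T where "T = k div 4"
  have n: "n = 2*m" using assms(1) unfolding m_def by presburger
  have k: "k = 4*T+1" using assms(3) unfolding T_def by presburger
  have T1: "1 \<le> T" using assms(4) k by simp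
  have Tm: "2*T+1 \<le> m" using assms(5) n k by simp
  show ?thesis using main[OF T1 Tm] n k by blast
qed


end
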